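(* Let $G$ be a connected finite graph, let $\mathcal{L}$ be a degree-list assignment for $G$, and let $g$ be a partial proper $\mathcal{L}$-coloring of $G$. Then for each vertex $u\in V(G)$, $G$ has a partial proper $\mathcal{L}$-coloring $f$ with $\mathrm{dom}(f)\supseteq V(G)\setminus\{u\}$ and $|f^{-1}(\alpha)|\geq|g^{-1}(\alpha)|$ for every color $\alpha$.
   Context: A list assignment for $G$ assigns to each vertex $x$ a set $\mathcal{L}(x)$; it is a degree-list assignment if $|\mathcal{L}(x)|\geq\deg_G(x)$ for all $x$. A partial $\mathcal{L}$-coloring is a function $g$ with $\mathrm{dom}(g)\subseteq V(G)$ and $g(x)\in\mathcal{L}(x)$ for $x\in\mathrm{dom}(g)$; it is proper if adjacent vertices in its domain get different colors. *)

theory Defs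
  imports Main
begin

definition fin_graph :: "'v set \<Rightarrow> ('v \<Rightarrow> 'v \<Rightarrow> bool) \<Rightarrow> bool" where
  "fin_graph V E \<longleftrightarrow> finite V \<and> (\<forall>x y. E x y \<longrightarrow> x \<in> V \<and> y \<in> V)
     \<and> (\<forall>x y. E x y \<longrightarrow> E y x) \<and> (\<forall>x. \<not> E x x)"

definition graph_connected :: "'v set \<Rightarrow> ('v \<Rightarrow> 'v \<Rightarrow> bool) \<Rightarrow> bool" where
  "graph_connected V E \<longleftrightarrow> V \<noteq> {} \<and> (\<forall>x\<in>V. \<forall>y\<in>V. E\<^sup>*\<^sup>* x y)"

definition degree :: "'v set \<Rightarrow> ('v \<Rightarrow> 'v \<Rightarrow> bool) \<Rightarrow> 'v \<Rightarrow> nat" where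
  "degree V E x = card {y \<in> V. E x y}"

text \<open>Degree-list assignment: |L(x)| \<ge> deg(x) for all x (an infinite list
  trivially satisfies this).\<close>
definition degree_list_assignment ::
  "'v set \<Rightarrow> ('v \<Rightarrow> 'v \<Rightarrow> bool) \<Rightarrow> ('v \<Rightarrow> 'c set) \<Rightarrow> bool" where
  "degree_list_assignment V E L \<longleftrightarrow>
     (\<forall>x\<in>V. infinite (L x) \<or> degree V E x \<le> card (L x))"

definition partial_L_coloring ::
  "'v set \<Rightarrow> ('v \<Rightarrow> 'c set) \<Rightarrow> ('v \<rightharpoonup> 'c) \<Rightarrow> bool" where
  "partial_L_coloring V L g \<longleftrightarrow> dom g \<subseteq> V \<and> (\<forall>x c. g x = Some c \<longrightarrow> c \<in> L x)"

definition proper_coloring ::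
  "('v \<Rightarrow> 'v \<Rightarrow> bool) \<Rightarrow> ('v \<rightharpoonup> 'c) \<Rightarrow> bool" where
  "proper_coloring E g \<longleftrightarrow>
     (\<forall>x y. x \<in> dom g \<and> y \<in> dom g \<and> E x y \<longrightarrow> g x \<noteq> g y)"

end

theory Submission
  imports Defs
begin

lemma cnt_finite:
  assumes "partial_L_coloring V L f" "finite V"
  shows "finite {x. f x = Some a}"
proof -
  have "{x. f x = Some a} \<subseteq> V" using assms unfolding partial_L_coloring_def by auto
  thus ?thesis using assms(2) finite_subset by blast
qed

lemma step_lemma_disj:
  assumes fg: "fin_graph V E" and dl: "degree_list_assignment V E L"
    and pc: "partial_L_coloring V L g" and pr: "proper_coloring E g"
    and yV: "y \<in> V" and yd: "y \<notin> dom g"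
  shows "(\<exists>c. partial_L_coloring V L (g(y\<mapsto>c)) \<and> proper_coloring E (g(y\<mapsto>c)))
     \<or> (\<forall>z. E y z \<longrightarrow> (\<exists>\<alpha>. g z = Some \<alpha> \<and> partial_L_coloring V L ((g(z:=None))(y\<mapsto>\<alpha>))
             \<and> proper_coloring E ((g(z:=None))(y\<mapsto>\<alpha>))))"
proof -
  define N where "N = {w \<in> V. E y w}"
  define C where "C = (the \<circ> g) ` (N \<inter> dom g)"
  have finV: "finite V" and Ein: "\<And>x y. E x y \<Longrightarrow> x \<in> V \<and> y \<in> V"
    and Esym: "\<And>x y. E x y \<Longrightarrow> E y x" and Eirr: "\<And>x. \<not> E x x"
    using fg unfolding fin_graph_def by auto
  have finN: "finite N" using finV N_def by auto
  have finC: "finite C" using finN C_def by auto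
  have Cchar: "\<And>c. c \<in> C \<longleftrightarrow> (\<exists>w. E y w \<and> g w = Some c)"
    unfolding C_def N_def using Ein by force
  show ?thesis
  proof (cases "\<exists>c\<in>L y. c \<notin> C")
    case True
    then obtain c where c: "c \<in> L y" "c \<notin> C" by blast
    have "partial_L_coloring V L (g(y\<mapsto>c))"
      using pc c yV unfolding partial_L_coloring_def by auto
    moreover have "proper_coloring E (g(y\<mapsto>c))"
      unfolding proper_coloring_def
    proof (intro allI impI)
      fix a b assume h: "a \<in> dom (g(y\<mapsto>c)) \<and> b \<in> dom (g(y\<mapsto>c)) \<and> E a b"
      show "(g(y\<mapsto>c)) a \<noteq> (g(y\<mapsto>c)) b"
      proof (cases "a = y")
        case True
        then have "b \<noteq> y" using h Eirr by auto
        then show ?thesis using True h c Cchar by auto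
      next
        case False
        show ?thesis
        proof (cases "b = y")
          case True
          then show ?thesis using False h c Cchar Esym by fastforce
        next
          case F2: False
          then show ?thesis using False h pr unfolding proper_coloring_def by auto
        qed
      qed
    qed
    ultimately show ?thesis by blast
  next
    case False
    hence LC: "L y \<subseteq> C" by blast
    hence finL: "finite (L y)" using finC finite_subset by blast
    have "degree V E y \<le> card (L y)" using dl yV finL unfolding degree_list_assignment_def by blast
    hence c1: "card N \<le> card (L y)" by (simp add: degree_def N_def)
    have c2: "card (L y) \<le> card C" using card_mono[OF finC LC] .
    have c3: "card C \<le> card (N \<inter> dom g)" unfolding C_def using card_image_le[OF finite_Int[OF disjI1[OF finN]]] .
    have c4: "card (N \<inter> dom g) \<le> card N" using card_mono[OF finN Int_lower1] .
    have eqs: "card N = card (L y)" "card (L y) = card C" "card C = card (N \<inter> dom g)"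
      "card (N \<inter> dom g) = card N" using c1 c2 c3 c4 by linarith+
    have Ndom: "N \<subseteq> dom g"
    proof -
      have "N \<inter> dom g = N" using card_subset_eq[OF finN _ eqs(4)] by blast
      thus ?thesis by blast
    qed
    have LCe: "L y = C" using card_subset_eq[OF finC LC eqs(2)] .
    have inj: "inj_on (the \<circ> g) (N \<inter> dom g)"
      using eq_card_imp_inj_on[OF _ ] finN eqs(3) unfolding C_def
      by (simp add: card_image_le eq_card_imp_inj_on)
    show ?thesis
    proof (intro disjI2 allI impI)
      fix z assume yz: "E y z"
      have zN: "z \<in> N" using yz Ein N_def by auto
      then obtain \<alpha> where za: "g z = Some \<alpha>" using Ndom by auto
      have aL: "\<alpha> \<in> L y" using LCe Cchar yz za by auto
      have zy: "z \<noteq> y" using yz Eirr by auto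
      define g' where "g' = (g(z:=None))(y\<mapsto>\<alpha>)"
      have "partial_L_coloring V L g'"
        using pc aL yV unfolding partial_L_coloring_def g'_def by auto
      moreover have "proper_coloring E g'"
        unfolding proper_coloring_def
      proof (intro allI impI)
        fix a b assume h: "a \<in> dom g' \<and> b \<in> dom g' \<and> E a b"
        have key: "\<And>w. E y w \<Longrightarrow> w \<noteq> z \<Longrightarrow> g w \<noteq> Some \<alpha>"
        proof
          fix w assume w: "E y w" "w \<noteq> z" "g w = Some \<alpha>"
          have "w \<in> N \<inter> dom g" "z \<in> N \<inter> dom g" using w zN za Ein N_def by auto
          moreover have "(the \<circ> g) w = (the \<circ> g) z" using w za by simp
          ultimately show False using inj w(2) inj_on_def by metis
        qed
        show "g' a \<noteq> g' b"
        proof (cases "a = y")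
          case True
          then have "b \<noteq> y" using h Eirr by auto
          then show ?thesis using True h key unfolding g'_def by (auto split: if_splits)
        next
          case False
          show ?thesis
          proof (cases "b = y")
            case True
            then show ?thesis using False h key Esym unfolding g'_def by (auto split: if_splits)
          next
            case F2: False
            then show ?thesis using False h pr unfolding proper_coloring_def g'_def
              by (auto split: if_splits)
          qed
        qed
      qed
      ultimately show "\<exists>\<alpha>. g z = Some \<alpha> \<and> partial_L_coloring V L ((g(z:=None))(y\<mapsto>\<alpha>))
             \<and> proper_coloring E ((g(z:=None))(y\<mapsto>\<alpha>))" using za g'_def by blast
    qed
  qed
qed


lemma cnt_ext:
  assumes "partial_L_coloring V L (g(y\<mapsto>c))" "finite V" "y \<notin> dom g"
  shows "card {x. g x = Some a} \<le> card {x. (g(y\<mapsto>c)) x = Some a}"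
  by (rule card_mono[OF cnt_finite[OF assms(1,2)]]) (use assms(3) in auto)

lemma cnt_swap:
  assumes "partial_L_coloring V L g" "finite V" "y \<notin> dom g" "g z = Some \<alpha>"
  shows "card {x. g x = Some a} = card {x. ((g(z:=None))(y\<mapsto>\<alpha>)) x = Some a}"
proof (cases "a = \<alpha>")
  case True
  have fin: "finite {x. g x = Some a}" using cnt_finite[OF assms(1,2)] .
  have yz: "y \<noteq> z" using assms(3,4) by auto
  have "{x. ((g(z:=None))(y\<mapsto>\<alpha>)) x = Some a} = insert y ({x. g x = Some a} - {z})"
    using True yz by auto
  moreover have "card (insert y ({x. g x = Some a} - {z})) = card {x. g x = Some a}"
  proof -
    let ?S = "{x. g x = Some a}"
    have zS: "z \<in> ?S" using assms(4) True by simp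
    have yS: "y \<notin> ?S - {z}" using assms(3) by auto
    have pos: "card ?S > 0" using fin zS card_gt_0_iff by blast
    have "card (insert y (?S - {z})) = Suc (card (?S - {z}))"
      using card_insert_disjoint[OF finite_Diff[OF fin] yS] .
    also have "\<dots> = Suc (card ?S - 1)" using card_Diff_singleton[OF zS] by simp
    also have "\<dots> = card ?S" using pos by simp
    finally show ?thesis .
  qed
  ultimately show ?thesis by simp
next
  case False
  have "{x. ((g(z:=None))(y\<mapsto>\<alpha>)) x = Some a} = {x. g x = Some a}"
    using False assms(3,4) by auto
  then show ?thesis by simp
qed

lemma propagate:
  assumes fg: "fin_graph V E" and dl: "degree_list_assignment V E L" and path: "E\<^sup>*\<^sup>* y u"
  shows "\<forall>g. partial_L_coloring V L g \<longrightarrow> proper_coloring E g \<longrightarrow> y \<notin> dom g \<longrightarrow> y \<noteq> u \<longrightarrow>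
    (\<exists>f. partial_L_coloring V L f \<and> proper_coloring E f \<and> dom g - {u} \<subseteq> dom f \<and> y \<in> dom f
       \<and> (\<forall>\<alpha>. card {x. g x = Some \<alpha>} \<le> card {x. f x = Some \<alpha>}))"
  using path
proof (induction rule: converse_rtranclp_induct)
  case base
  then show ?case by blast
next
  case (step y z)
  have finV: "finite V" and Ein: "\<And>x y. E x y \<Longrightarrow> x \<in> V \<and> y \<in> V"
    using fg unfolding fin_graph_def by auto
  have yV: "y \<in> V" using step(1) Ein by blast
  show ?case
  proof (intro allI impI)
    fix g assume pc: "partial_L_coloring V L g" and pr: "proper_coloring E g"
      and yd: "y \<notin> dom g" and yu: "y \<noteq> u"
    from step_lemma_disj[OF fg dl pc pr yV yd]
    show "\<exists>f. partial_L_coloring V L f \<and> proper_coloring E f \<and> dom g - {u} \<subseteq> dom f \<and> y \<in> dom f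
       \<and> (\<forall>\<alpha>. card {x. g x = Some \<alpha>} \<le> card {x. f x = Some \<alpha>})"
    proof
      assume "\<exists>c. partial_L_coloring V L (g(y\<mapsto>c)) \<and> proper_coloring E (g(y\<mapsto>c))"
      then obtain c where c: "partial_L_coloring V L (g(y\<mapsto>c))" "proper_coloring E (g(y\<mapsto>c))" by blast
      have "dom g - {u} \<subseteq> dom (g(y\<mapsto>c))" "y \<in> dom (g(y\<mapsto>c))" by auto
      moreover have "\<forall>\<alpha>. card {x. g x = Some \<alpha>} \<le> card {x. (g(y\<mapsto>c)) x = Some \<alpha>}"
        using cnt_ext[OF c(1) finV yd] by blast
      ultimately show ?thesis using c by blast
    next
      assume "\<forall>z. E y z \<longrightarrow> (\<exists>\<alpha>. g z = Some \<alpha> \<and> partial_L_coloring V L ((g(z:=None))(y\<mapsto>\<alpha>))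
             \<and> proper_coloring E ((g(z:=None))(y\<mapsto>\<alpha>)))"
      then obtain \<alpha> where a: "g z = Some \<alpha>" "partial_L_coloring V L ((g(z:=None))(y\<mapsto>\<alpha>))"
             "proper_coloring E ((g(z:=None))(y\<mapsto>\<alpha>))" using step(1) by blast
      define g' where "g' = (g(z:=None))(y\<mapsto>\<alpha>)"
      have pg': "partial_L_coloring V L g'" using a(2) unfolding g'_def .
      have prg': "proper_coloring E g'" using a(3) unfolding g'_def .
      have cnt: "\<And>b. card {x. g x = Some b} = card {x. g' x = Some b}"
        unfolding g'_def by (rule cnt_swap[OF pc finV yd a(1)])
      have cnt': "\<forall>b. card {x. g x = Some b} \<le> card {x. g' x = Some b}"
        using cnt by simp
      have domg': "dom g' = insert y (dom g - {z})" unfolding g'_def by auto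
      have zy: "z \<noteq> y" using step(1) fg unfolding fin_graph_def by blast
      show ?thesis
      proof (cases "z = u")
        case True
        have "dom g - {u} \<subseteq> dom g'" "y \<in> dom g'" using domg' True by auto
        then show ?thesis using pg' prg' cnt' by blast
      next
        case False
        have zd: "z \<notin> dom g'" using domg' zy by simp
        obtain f where f: "partial_L_coloring V L f" "proper_coloring E f" "dom g' - {u} \<subseteq> dom f"
          "z \<in> dom f" "\<forall>\<alpha>. card {x. g' x = Some \<alpha>} \<le> card {x. f x = Some \<alpha>}"
          using step(3)[rule_format, OF pg' prg' zd False] by (elim exE conjE) (rule that)
        have d1: "dom g - {u} \<subseteq> dom f" using f(3,4) domg' by blast
        have d2: "y \<in> dom f" using f(3) domg' yu by blast
        have d3: "\<forall>\<alpha>. card {x. g x = Some \<alpha>} \<le> card {x. f x = Some \<alpha>}" using f(5) cnt by simp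
        show ?thesis using f(1,2) d1 d2 d3 by blast
      qed
    qed
  qed
qed

theorem lemma4p1:
  fixes V :: "'v set" and E :: "'v \<Rightarrow> 'v \<Rightarrow> bool"
    and L :: "'v \<Rightarrow> 'c set" and g :: "'v \<rightharpoonup> 'c" and u :: 'v
  assumes "fin_graph V E" and "graph_connected V E"
    and "degree_list_assignment V E L"
    and "partial_L_coloring V L g" and "proper_coloring E g"
    and "u \<in> V"
  shows "\<exists>f. partial_L_coloring V L f \<and> proper_coloring E f \<and> V - {u} \<subseteq> dom f
           \<and> (\<forall>\<alpha>. card {x. f x = Some \<alpha>} \<ge> card {x. g x = Some \<alpha>})"
  using assms(4,5)
proof (induction "card (V - {u} - dom g)" arbitrary: g rule: less_induct)
  case less
  have finV: "finite V" using assms(1) unfolding fin_graph_def by auto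
  show ?case
  proof (cases "V - {u} \<subseteq> dom g")
    case True
    have "\<forall>\<alpha>. card {x. g x = Some \<alpha>} \<ge> card {x. g x = Some \<alpha>}" by simp
    then show ?thesis using less.prems True by blast
  next
    case False
    then obtain y where y: "y \<in> V" "y \<noteq> u" "y \<notin> dom g" by blast
    have "E\<^sup>*\<^sup>* y u" using assms(2,6) y unfolding graph_connected_def by blast
    from propagate[OF assms(1,3) this, rule_format, OF less.prems y(3,2)] obtain f1 where
      f1: "partial_L_coloring V L f1" "proper_coloring E f1" "dom g - {u} \<subseteq> dom f1" "y \<in> dom f1"
        "\<forall>\<alpha>. card {x. g x = Some \<alpha>} \<le> card {x. f1 x = Some \<alpha>}" by (elim exE conjE) (rule that)
    have "V - {u} - dom f1 \<subset> V - {u} - dom g" using f1(3,4) y by blast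
    hence lt: "card (V - {u} - dom f1) < card (V - {u} - dom g)"
      using finV by (meson finite_Diff psubset_card_mono)
    obtain f where f: "partial_L_coloring V L f" "proper_coloring E f" "V - {u} \<subseteq> dom f"
      "\<forall>\<alpha>. card {x. f1 x = Some \<alpha>} \<le> card {x. f x = Some \<alpha>}"
      using less.hyps[OF lt f1(1,2)] by (elim exE conjE) (rule that)
    have "\<forall>\<alpha>. card {x. f x = Some \<alpha>} \<ge> card {x. g x = Some \<alpha>}"
    proof
      fix \<alpha> show "card {x. f x = Some \<alpha>} \<ge> card {x. g x = Some \<alpha>}"
        using f(4) f1(5) le_trans by blast
    qed
    then show ?thesis using f(1-3) by blast
  qed
qed

end
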